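(* For every graph $G$ and integer $m\ge1$, the lexicographic product $G\circ mK_1$ is well-bicovered if and only if $G$ is well-bicovered.
   Context: All graphs are finite and simple; "subgraph" means induced subgraph. $mK_1$ is the edgeless graph on $m$ vertices. A graph is well-bicovered if every vertex-inclusion-maximal induced bipartite subgraph has the same order. The lexicographic product $G\circ H$ has vertex set $V(G)\times V(H)$, with $(u,v)$ adjacent to $(x,y)$ iff $ux\in E(G)$, or $u=x$ and $vy\in E(H)$. *)

theory Defs
  imports Main
begin

text \<open>A finite simple graph is given by a vertex set V and an edge relation E;
only edges between vertices of V are relevant.\<close>

definition simple_graph :: "'a set \<Rightarrow> ('a \<Rightarrow> 'a \<Rightarrow> bool) \<Rightarrow> bool" where
  "simple_graph V E \<longleftrightarrow> finite V \<and> (\<forall>x\<in>V. \<forall>y\<in>V. E x y \<longrightarrow> E y x) \<and> (\<forall>x\<in>V. \<not> E x x)"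

definition bipartite_on :: "('a \<Rightarrow> 'a \<Rightarrow> bool) \<Rightarrow> 'a set \<Rightarrow> bool" where
  "bipartite_on E S \<longleftrightarrow> (\<exists>c :: 'a \<Rightarrow> bool. \<forall>x\<in>S. \<forall>y\<in>S. E x y \<longrightarrow> c x \<noteq> c y)"

definition maximal_bipartite :: "'a set \<Rightarrow> ('a \<Rightarrow> 'a \<Rightarrow> bool) \<Rightarrow> 'a set \<Rightarrow> bool" where
  "maximal_bipartite V E S \<longleftrightarrow> S \<subseteq> V \<and> bipartite_on E S \<and>
     (\<forall>T. S \<subset> T \<and> T \<subseteq> V \<longrightarrow> \<not> bipartite_on E T)"

definition well_bicovered :: "'a set \<Rightarrow> ('a \<Rightarrow> 'a \<Rightarrow> bool) \<Rightarrow> bool" where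
  "well_bicovered V E \<longleftrightarrow>
     (\<forall>S T. maximal_bipartite V E S \<and> maximal_bipartite V E T \<longrightarrow> card S = card T)"

definition lex_prod_edges :: "('a \<Rightarrow> 'a \<Rightarrow> bool) \<Rightarrow> ('b \<Rightarrow> 'b \<Rightarrow> bool) \<Rightarrow> ('a \<times> 'b) \<Rightarrow> ('a \<times> 'b) \<Rightarrow> bool" where
  "lex_prod_edges EG EH = (\<lambda>(u, v) (x, y). EG u x \<or> (u = x \<and> EH v y))"

definition lex_prod_verts :: "'a set \<Rightarrow> 'b set \<Rightarrow> ('a \<times> 'b) set" where
  "lex_prod_verts VG VH = VG \<times> VH"

definition empty_graph_verts :: "nat \<Rightarrow> nat set" where
  "empty_graph_verts m = {0..<m}"

definition empty_graph_edges :: "nat \<Rightarrow> nat \<Rightarrow> bool" where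
  "empty_graph_edges = (\<lambda>_ _. False)"

end

theory Submission
  imports Defs
begin

lemma F_eq: "lex_prod_edges E empty_graph_edges (u,i) (x,j) = E u x"
  by (simp add: lex_prod_edges_def empty_graph_edges_def)

lemma bip_proj:
  assumes "bipartite_on (lex_prod_edges E empty_graph_edges) S"
  shows "bipartite_on E (fst ` S)"
proof -
  from assms obtain c :: "_ \<Rightarrow> bool" where c: "\<forall>x\<in>S. \<forall>y\<in>S. lex_prod_edges E empty_graph_edges x y \<longrightarrow> c x \<noteq> c y"
    unfolding bipartite_on_def by blast
  let ?F = "lex_prod_edges E empty_graph_edges"
  define r where "r u = (SOME p. p \<in> S \<and> fst p = u)" for u
  have r: "r u \<in> S \<and> fst (r u) = u" if "u \<in> fst ` S" for u
    using that unfolding r_def by (metis (mono_tags, lifting) imageE someI)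
  show ?thesis unfolding bipartite_on_def
  proof (intro exI[of _ "\<lambda>u. c (r u)"] ballI impI)
    fix x y assume xy: "x \<in> fst ` S" "y \<in> fst ` S" "E x y"
    obtain x1 x2 where "r x = (x1,x2)" by fastforce
    moreover obtain y1 y2 where "r y = (y1,y2)" by fastforce
    ultimately have "r x \<in> S" "r y \<in> S" "?F (r x) (r y)" using r[OF xy(1)] r[OF xy(2)] xy(3)
      by (auto simp add: F_eq)
    thus "c (r x) \<noteq> c (r y)" using c by blast
  qed
qed

lemma bip_lift:
  assumes "bipartite_on E T"
  shows "bipartite_on (lex_prod_edges E empty_graph_edges) (T \<times> A)"
proof -
  from assms obtain c :: "_ \<Rightarrow> bool" where c: "\<forall>x\<in>T. \<forall>y\<in>T. E x y \<longrightarrow> c x \<noteq> c y"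
    unfolding bipartite_on_def by blast
  show ?thesis unfolding bipartite_on_def
  proof (rule exI[of _ "\<lambda>p. c (fst p)"], intro ballI impI)
    fix p q assume "p \<in> T \<times> A" "q \<in> T \<times> A" "lex_prod_edges E empty_graph_edges p q"
    then show "c (fst p) \<noteq> c (fst q)" using c by (cases p, cases q) (simp add: F_eq)
  qed
qed

lemma max_prod:
  assumes "maximal_bipartite (lex_prod_verts V (empty_graph_verts m)) (lex_prod_edges E empty_graph_edges) S" "m \<ge> 1"
  shows "S = fst ` S \<times> {0..<m} \<and> maximal_bipartite V E (fst ` S)"
proof -
  let ?F = "lex_prod_edges E empty_graph_edges"
  have S: "S \<subseteq> V \<times> {0..<m}" "bipartite_on ?F S"
    and mx: "\<And>T. S \<subset> T \<Longrightarrow> T \<subseteq> V \<times> {0..<m} \<Longrightarrow> \<not> bipartite_on ?F T"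
    using assms unfolding maximal_bipartite_def lex_prod_verts_def empty_graph_verts_def by auto
  have b1: "bipartite_on E (fst ` S)" using bip_proj[OF S(2)] .
  have b2: "bipartite_on ?F (fst ` S \<times> {0..<m})" using bip_lift[OF b1] .
  have sub: "S \<subseteq> fst ` S \<times> {0..<m}"
  proof
    fix p assume "p \<in> S"
    moreover have "fst p \<in> fst ` S" using \<open>p \<in> S\<close> by (rule imageI)
    moreover have "snd p \<in> {0..<m}" using \<open>p \<in> S\<close> S(1) by (cases p) auto
    ultimately show "p \<in> fst ` S \<times> {0..<m}" by (cases p) auto
  qed
  have sub2: "fst ` S \<times> {0..<m} \<subseteq> V \<times> {0..<m}" using S(1) by auto
  have eq: "S = fst ` S \<times> {0..<m}"
  proof (rule ccontr)
    assume "S \<noteq> fst ` S \<times> {0..<m}"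
    with sub have "S \<subset> fst ` S \<times> {0..<m}" by (rule psubsetI)
    from mx[OF this sub2] b2 show False by contradiction
  qed
  have "maximal_bipartite V E (fst ` S)"
    unfolding maximal_bipartite_def
  proof (intro conjI allI impI)
    show "fst ` S \<subseteq> V" using S(1) by auto
    show "bipartite_on E (fst ` S)" by (rule b1)
    fix T assume T: "fst ` S \<subset> T \<and> T \<subseteq> V"
    show "\<not> bipartite_on E T"
    proof
      assume "bipartite_on E T"
      hence "bipartite_on ?F (T \<times> {0..<m})" by (rule bip_lift)
      moreover have "S \<subset> T \<times> {0..<m}"
      proof -
        have "S \<subseteq> T \<times> {0..<m}" using sub T by blast
        moreover obtain u where "u \<in> T" "u \<notin> fst ` S" using T by blast
        moreover have "0 < m" using assms(2) by simp
        ultimately have "(u,0) \<in> T \<times> {0..<m}" "(u,0) \<notin> S" by (auto simp: image_iff)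
        thus ?thesis using \<open>S \<subseteq> T \<times> {0..<m}\<close> by blast
      qed
      moreover have "T \<times> {0..<m} \<subseteq> V \<times> {0..<m}" using T by auto
      ultimately show False using mx by blast
    qed
  qed
  with eq show ?thesis by blast
qed

lemma max_lift:
  assumes "maximal_bipartite V E T" "m \<ge> 1"
  shows "maximal_bipartite (lex_prod_verts V (empty_graph_verts m)) (lex_prod_edges E empty_graph_edges) (T \<times> {0..<m})"
  unfolding maximal_bipartite_def lex_prod_verts_def empty_graph_verts_def
proof (intro conjI allI impI)
  let ?F = "lex_prod_edges E empty_graph_edges"
  have T: "T \<subseteq> V" "bipartite_on E T" and mx: "\<And>U. T \<subset> U \<Longrightarrow> U \<subseteq> V \<Longrightarrow> \<not> bipartite_on E U"
    using assms(1) unfolding maximal_bipartite_def by auto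
  show "T \<times> {0..<m} \<subseteq> V \<times> {0..<m}" using T by auto
  show "bipartite_on ?F (T \<times> {0..<m})" using bip_lift[OF T(2)] .
  fix S assume S: "T \<times> {0..<m} \<subset> S \<and> S \<subseteq> V \<times> {0..<m}"
  show "\<not> bipartite_on ?F S"
  proof
    assume "bipartite_on ?F S"
    hence b: "bipartite_on E (fst ` S)" by (rule bip_proj)
    have "T \<subseteq> fst ` S"
    proof
      fix t assume "t \<in> T"
      hence "(t,0) \<in> T \<times> {0..<m}" using assms(2) by auto
      hence "(t,0) \<in> S" using S by blast
      thus "t \<in> fst ` S" by (metis fst_conv image_eqI)
    qed
    moreover obtain p where p: "p \<in> S" "p \<notin> T \<times> {0..<m}" using S by blast
    moreover have "fst p \<notin> T" using p S by auto
    ultimately have "T \<subset> fst ` S" by blast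
    moreover have "fst ` S \<subseteq> V" using S by auto
    ultimately show False using mx b by blast
  qed
qed

theorem mainTheorem5:
  fixes V :: "'a set" and E :: "'a \<Rightarrow> 'a \<Rightarrow> bool" and m :: nat
  assumes "simple_graph V E" and "m \<ge> 1"
  shows "well_bicovered (lex_prod_verts V (empty_graph_verts m))
                        (lex_prod_edges E empty_graph_edges)
         \<longleftrightarrow> well_bicovered V E"
proof
  assume w: "well_bicovered (lex_prod_verts V (empty_graph_verts m)) (lex_prod_edges E empty_graph_edges)"
  show "well_bicovered V E" unfolding well_bicovered_def
  proof (intro allI impI)
    fix S T assume "maximal_bipartite V E S \<and> maximal_bipartite V E T"
    hence "card (S \<times> {0..<m}) = card (T \<times> {0..<m})"
      using w max_lift[OF _ assms(2)] unfolding well_bicovered_def by blast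
    thus "card S = card T" using assms(2) by (simp add: card_cartesian_product)
  qed
next
  assume w: "well_bicovered V E"
  show "well_bicovered (lex_prod_verts V (empty_graph_verts m)) (lex_prod_edges E empty_graph_edges)"
    unfolding well_bicovered_def
  proof (intro allI impI)
    fix S T assume a: "maximal_bipartite (lex_prod_verts V (empty_graph_verts m)) (lex_prod_edges E empty_graph_edges) S \<and>
       maximal_bipartite (lex_prod_verts V (empty_graph_verts m)) (lex_prod_edges E empty_graph_edges) T"
    have mS: "S = fst ` S \<times> {0..<m} \<and> maximal_bipartite V E (fst ` S)" using max_prod[OF conjunct1[OF a] assms(2)] .
    have mT: "T = fst ` T \<times> {0..<m} \<and> maximal_bipartite V E (fst ` T)" using max_prod[OF conjunct2[OF a] assms(2)] .
    have "card (fst ` S) = card (fst ` T)"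
      using w mS mT unfolding well_bicovered_def by blast
    moreover have "S = fst ` S \<times> {0..<m}" "T = fst ` T \<times> {0..<m}" using mS mT by blast+
    ultimately show "card S = card T" by (metis card_cartesian_product)
  qed
qed

end
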